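(* Let $L\ge 3$, $W=(\mathbb{Z}/2\mathbb{Z})^{*L}$ with generating set $S$, $q\in(0,1]$, $h=\sum_{s\in S}T_s$, and let $R_h$ be the operator on $\ell^2(W)$ of right multiplication by $h$. For every $v,w\in W$ with $|v|=|w|$ and every $\epsilon>0$ there exists $\eta\in\ell^2(W)$ such that $$\|e_v-e_w-(h\eta-R_h\eta)\|_2<\epsilon.$$
   Context: $W=(\mathbb{Z}/2\mathbb{Z})^{*L}$ is the free product of $L$ copies of $\mathbb{Z}/2\mathbb{Z}$; $S$ is the set of the $L$ canonical generators, $|\cdot|$ is word length with respect to $S$. Put $p=\frac{q-1}{q^2}$. $\mathbb{C}_q[W]$ is the $*$-algebra with linear basis $\{T_w: w\in W\}$, $T_e=1$, $T_w^*=T_{w^{-1}}$, and for $s\in S$, $w\in W$: $T_sT_w=T_{sw}$ if $|sw|>|w|$, $T_sT_w=T_{sw}+pT_w$ if $|sw|<|w|$ (equivalently $T_wT_s=T_{ws}$ if $|ws|>|w|$, $T_wT_s=T_{ws}+pT_w$ if $|ws|<|w|$). Identify $T_w$ with $e_w=\delta_w\in\ell^2(W)$; left multiplication by $h$ extends to a bounded operator (again denoted $h$) on $\ell^2(W)$, and right multiplication by $h$, $T_v\mapsto T_vh$, extends to a bounded operator $R_h$ on $\ell^2(W)$. *)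

theory Defs
  imports "HOL-Analysis.Analysis"
begin

text \<open>Elements of W = free product of L copies of Z/2 are represented by reduced words:
  lists over the generators {0..<L} with no two consecutive letters equal.
  Word length is list length.\<close>

definition Wset :: "nat \<Rightarrow> nat list set" where
  "Wset L = {xs. set xs \<subseteq> {..<L} \<and> (\<forall>i. Suc i < length xs \<longrightarrow> xs ! i \<noteq> xs ! Suc i)}"

definition lmul :: "nat \<Rightarrow> nat list \<Rightarrow> nat list" where
  "lmul s w = (if w \<noteq> [] \<and> hd w = s then tl w else s # w)"

definition rmul :: "nat list \<Rightarrow> nat \<Rightarrow> nat list" where
  "rmul w s = (if w \<noteq> [] \<and> last w = s then butlast w else w @ [s])"

definition hecke_p :: "real \<Rightarrow> real" where
  "hecke_p q = (q - 1) / q\<^sup>2"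

text \<open>Left multiplication by h = sum of T_s, on functions W -> C (coordinates w.r.t. e_x):
  T_s e_w = e_{sw} if |sw|>|w|, and e_{sw} + p e_w if |sw|<|w|; hence
  (T_s eta)(x) = eta(sx) + (if |sx|<|x| then p eta(x) else 0).\<close>
definition left_h :: "nat \<Rightarrow> real \<Rightarrow> (nat list \<Rightarrow> complex) \<Rightarrow> nat list \<Rightarrow> complex" where
  "left_h L q \<eta> x = (\<Sum>s<L. \<eta> (lmul s x)
      + (if length (lmul s x) < length x then of_real (hecke_p q) * \<eta> x else 0))"

definition right_h :: "nat \<Rightarrow> real \<Rightarrow> (nat list \<Rightarrow> complex) \<Rightarrow> nat list \<Rightarrow> complex" where
  "right_h L q \<eta> x = (\<Sum>s<L. \<eta> (rmul x s)
      + (if length (rmul x s) < length x then of_real (hecke_p q) * \<eta> x else 0))"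

definition delta :: "nat list \<Rightarrow> nat list \<Rightarrow> complex" where
  "delta v x = (if x = v then 1 else 0)"

definition is_l2 :: "nat \<Rightarrow> (nat list \<Rightarrow> complex) \<Rightarrow> bool" where
  "is_l2 L f \<longleftrightarrow> (\<forall>x. x \<notin> Wset L \<longrightarrow> f x = 0) \<and> (\<lambda>x. (norm (f x))\<^sup>2) summable_on Wset L"

definition l2norm :: "nat \<Rightarrow> (nat list \<Rightarrow> complex) \<Rightarrow> real" where
  "l2norm L f = sqrt (infsum (\<lambda>x. (norm (f x))\<^sup>2) (Wset L))"

end

theory Submission
  imports Defs
begin
lemma Wset_cons: "s # x \<in> Wset L \<longleftrightarrow> s < L \<and> x \<in> Wset L \<and> (x = [] \<or> s \<noteq> hd x)"
  unfolding Wset_def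
  apply (cases x)
   apply auto
  subgoal for a xs i by (cases i) auto
  done

lemma Wset_nil[simp]: "[] \<in> Wset L"
  unfolding Wset_def by auto

lemma Wset_append: "a \<in> Wset L \<Longrightarrow> b \<in> Wset L \<Longrightarrow> (a = [] \<or> b = [] \<or> last a \<noteq> hd b) \<Longrightarrow> a @ b \<in> Wset L"
proof (induction a)
  case Nil then show ?case by simp
next
  case (Cons s a)
  have "a \<in> Wset L" "s < L" "a = [] \<or> s \<noteq> hd a" using Cons.prems(1) Wset_cons by auto
  moreover have "a @ b \<in> Wset L"
    using Cons by (cases "a = []") (auto simp: Wset_cons)
  ultimately show ?case
    using Cons.prems by (cases a; cases b) (auto simp: Wset_cons)
qed

lemma Wset_snoc: "x @ [s] \<in> Wset L \<longleftrightarrow> s < L \<and> x \<in> Wset L \<and> (x = [] \<or> s \<noteq> last x)"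
proof (induction x)
  case Nil then show ?case by (simp add: Wset_cons)
next
  case (Cons a x)
  then show ?case by (cases x) (auto simp: Wset_cons)
qed

lemma Wset_take: "x \<in> Wset L \<Longrightarrow> take i x \<in> Wset L"
  unfolding Wset_def by (auto dest: in_set_takeD)

lemma Wset_drop: "x \<in> Wset L \<Longrightarrow> drop i x \<in> Wset L"
  unfolding Wset_def
  by (auto dest: in_set_dropD)

lemma Wset_hd: "x \<in> Wset L \<Longrightarrow> x \<noteq> [] \<Longrightarrow> hd x < L"
  unfolding Wset_def by (cases x) auto

lemma Wset_last: "x \<in> Wset L \<Longrightarrow> x \<noteq> [] \<Longrightarrow> last x < L"
  unfolding Wset_def using last_in_set by blast

lemma Wset_tl: "x \<in> Wset L \<Longrightarrow> tl x \<in> Wset L"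
  by (metis Wset_drop drop_Suc drop_0)

lemma Wset_butlast: "x \<in> Wset L \<Longrightarrow> butlast x \<in> Wset L"
  by (metis Wset_take butlast_conv_take)

lemma lmul_Wset: "x \<in> Wset L \<Longrightarrow> s < L \<Longrightarrow> lmul s x \<in> Wset L"
  unfolding lmul_def by (auto simp: Wset_cons Wset_tl)

lemma rmul_Wset: "x \<in> Wset L \<Longrightarrow> s < L \<Longrightarrow> rmul x s \<in> Wset L"
  unfolding rmul_def by (auto simp: Wset_snoc Wset_butlast)

definition Dop :: "nat \<Rightarrow> (nat list \<Rightarrow> complex) \<Rightarrow> nat list \<Rightarrow> complex" where
  "Dop L \<eta> x = (\<Sum>s<L. \<eta> (lmul s x) - \<eta> (rmul x s))"

lemma p_sum_left:
  assumes "x \<in> Wset L"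
  shows "(\<Sum>s<L. (if length (lmul s x) < length x then c else (0::complex))) = (if x = [] then 0 else c)"
proof -
  have "\<And>s. (length (lmul s x) < length x) = (x \<noteq> [] \<and> s = hd x)"
    unfolding lmul_def by (cases x) auto
  then have "(\<Sum>s<L. (if length (lmul s x) < length x then c else (0::complex))) =
     (\<Sum>s<L. (if s = hd x then (if x = [] then 0 else c) else 0))"
    by (intro sum.cong) auto
  also have "\<dots> = (if x = [] then 0 else c)"
    using Wset_hd[OF assms] by (auto simp: sum.delta')
  finally show ?thesis .
qed

lemma p_sum_right:
  assumes "x \<in> Wset L"
  shows "(\<Sum>s<L. (if length (rmul x s) < length x then c else (0::complex))) = (if x = [] then 0 else c)"
proof -
  have "\<And>s. (length (rmul x s) < length x) = (x \<noteq> [] \<and> s = last x)"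
    unfolding rmul_def by (cases x) auto
  then have "(\<Sum>s<L. (if length (rmul x s) < length x then c else (0::complex))) =
     (\<Sum>s<L. (if s = last x then (if x = [] then 0 else c) else 0))"
    by (intro sum.cong) auto
  also have "\<dots> = (if x = [] then 0 else c)"
    using Wset_last[OF assms] by (auto simp: sum.delta')
  finally show ?thesis .
qed

lemma left_right_Dop:
  assumes "x \<in> Wset L"
  shows "left_h L q \<eta> x - right_h L q \<eta> x = Dop L \<eta> x"
  unfolding left_h_def right_h_def Dop_def sum.distrib sum_subtractf
  using p_sum_left[OF assms, of "of_real (hecke_p q) * \<eta> x"]
     p_sum_right[OF assms, of "of_real (hecke_p q) * \<eta> x"]
  by simp

definition small :: "nat \<Rightarrow> (nat list \<Rightarrow> complex) \<Rightarrow> real \<Rightarrow> bool" where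
  "small L f e \<longleftrightarrow> (\<exists>A. finite A \<and> A \<subseteq> Wset L \<and> (\<forall>x\<in>Wset L - A. f x = 0) \<and> L2_set (\<lambda>x. norm (f x)) A < e)"

definition fs :: "nat \<Rightarrow> (nat list \<Rightarrow> complex) \<Rightarrow> bool" where
  "fs L \<eta> \<longleftrightarrow> (\<forall>x. x \<notin> Wset L \<longrightarrow> \<eta> x = 0) \<and> finite {x. \<eta> x \<noteq> 0}"

definition Rel :: "nat \<Rightarrow> nat list \<Rightarrow> nat list \<Rightarrow> bool" where
  "Rel L v w \<longleftrightarrow> (\<forall>e>0. \<exists>\<eta>. fs L \<eta> \<and> small L (\<lambda>x. delta v x - delta w x - Dop L \<eta> x) e)"

lemma L2_set_extend:
  assumes "finite B" "A \<subseteq> B" "\<forall>x\<in>B - A. f x = 0"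
  shows "L2_set f B = L2_set f A"
  unfolding L2_set_def
  using assms by (intro arg_cong[where f=sqrt] sum.mono_neutral_right) auto

lemma small_add:
  assumes "small L f a" "small L g b"
  shows "small L (\<lambda>x. f x + g x) (a + b)"
proof -
  obtain A where A: "finite A" "A \<subseteq> Wset L" "\<forall>x\<in>Wset L - A. f x = 0" "L2_set (\<lambda>x. norm (f x)) A < a"
    using assms(1) unfolding small_def by blast
  obtain B where B: "finite B" "B \<subseteq> Wset L" "\<forall>x\<in>Wset L - B. g x = 0" "L2_set (\<lambda>x. norm (g x)) B < b"
    using assms(2) unfolding small_def by blast
  have "L2_set (\<lambda>x. norm (f x + g x)) (A \<union> B) \<le> L2_set (\<lambda>x. norm (f x) + norm (g x)) (A \<union> B)"
    by (intro L2_set_mono norm_triangle_ineq) auto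
  also have "\<dots> \<le> L2_set (\<lambda>x. norm (f x)) (A \<union> B) + L2_set (\<lambda>x. norm (g x)) (A \<union> B)"
    by (rule L2_set_triangle_ineq)
  also have "L2_set (\<lambda>x. norm (f x)) (A \<union> B) = L2_set (\<lambda>x. norm (f x)) A"
    using A B by (intro L2_set_extend) auto
  also have "L2_set (\<lambda>x. norm (g x)) (A \<union> B) = L2_set (\<lambda>x. norm (g x)) B"
    using A B by (intro L2_set_extend) auto
  finally have "L2_set (\<lambda>x. norm (f x + g x)) (A \<union> B) < a + b" using A(4) B(4) by linarith
  then show ?thesis unfolding small_def using A B
    by (intro exI[of _ "A \<union> B"]) auto
qed

lemma small_neg:
  assumes "small L f a"
  shows "small L (\<lambda>x. - f x) a"
  using assms unfolding small_def by auto

lemma small_cong: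
  assumes "small L f a" "\<And>x. x \<in> Wset L \<Longrightarrow> g x = f x"
  shows "small L g a"
proof -
  obtain A where A: "finite A" "A \<subseteq> Wset L" "\<forall>x\<in>Wset L - A. f x = 0" "L2_set (\<lambda>x. norm (f x)) A < a"
    using assms(1) unfolding small_def by blast
  have "L2_set (\<lambda>x. norm (g x)) A = L2_set (\<lambda>x. norm (f x)) A"
    using A(2) assms(2) by (intro L2_set_cong) auto
  then show ?thesis unfolding small_def using A assms(2) by (intro exI[of _ A]) auto
qed

lemma small_l2norm:
  assumes "small L f a"
  shows "l2norm L f < a"
proof -
  obtain A where A: "finite A" "A \<subseteq> Wset L" "\<forall>x\<in>Wset L - A. f x = 0" "L2_set (\<lambda>x. norm (f x)) A < a"
    using assms(1) unfolding small_def by blast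
  have "infsum (\<lambda>x. (norm (f x))\<^sup>2) (Wset L) = infsum (\<lambda>x. (norm (f x))\<^sup>2) A"
    using A by (intro infsum_cong_neutral) auto
  also have "\<dots> = (\<Sum>x\<in>A. (norm (f x))\<^sup>2)" using A(1) by simp
  finally show ?thesis using A(4) unfolding l2norm_def L2_set_def by simp
qed

lemma fs_is_l2:
  assumes "fs L \<eta>"
  shows "is_l2 L \<eta>"
proof -
  have fin: "finite {x. \<eta> x \<noteq> 0}" using assms unfolding fs_def by blast
  have "(\<lambda>x. (norm (\<eta> x))\<^sup>2) summable_on {x. \<eta> x \<noteq> 0}" using fin by simp
  then have "(\<lambda>x. (norm (\<eta> x))\<^sup>2) summable_on Wset L"
    using assms unfolding fs_def
    by (subst summable_on_cong_neutral[where T="{x. \<eta> x \<noteq> 0}" and g="(\<lambda>x. (norm (\<eta> x))\<^sup>2)"]) auto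
  then show ?thesis using assms unfolding fs_def is_l2_def by blast
qed

lemma fs_add: "fs L f \<Longrightarrow> fs L g \<Longrightarrow> fs L (\<lambda>x. f x + g x)"
  unfolding fs_def
  by (auto intro: finite_subset[of _ "{x. f x \<noteq> 0} \<union> {x. g x \<noteq> 0}"])

lemma fs_neg: "fs L f \<Longrightarrow> fs L (\<lambda>x. - f x)"
  unfolding fs_def by auto

lemma fs_zero: "fs L (\<lambda>x. 0)"
  unfolding fs_def by auto

lemma Dop_add: "Dop L (\<lambda>x. f x + g x) x = Dop L f x + Dop L g x"
  unfolding Dop_def by (simp add: sum.distrib[symmetric] algebra_simps)

lemma Dop_neg: "Dop L (\<lambda>x. - f x) x = - Dop L f x"
  unfolding Dop_def by (simp add: sum_negf[symmetric] algebra_simps)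

lemma Rel_refl: "Rel L v v"
  unfolding Rel_def small_def
  by (auto intro!: exI[of _ "\<lambda>x. 0"] exI[of _ "{}"] simp: fs_zero Dop_def)

lemma Rel_sym: "Rel L v w \<Longrightarrow> Rel L w v"
  unfolding Rel_def
proof (intro allI impI)
  fix e :: real assume H: "\<forall>e>0. \<exists>\<eta>. fs L \<eta> \<and> small L (\<lambda>x. delta v x - delta w x - Dop L \<eta> x) e" and e: "e > 0"
  then obtain \<eta> where "fs L \<eta>" "small L (\<lambda>x. delta v x - delta w x - Dop L \<eta> x) e" by blast
  then show "\<exists>\<eta>. fs L \<eta> \<and> small L (\<lambda>x. delta w x - delta v x - Dop L \<eta> x) e"
  proof (intro exI[of _ "\<lambda>x. - \<eta> x"] conjI)
    show "fs L (\<lambda>x. - \<eta> x)" using \<open>fs L \<eta>\<close> by (rule fs_neg)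
    show "small L (\<lambda>x. delta w x - delta v x - Dop L (\<lambda>x. - \<eta> x) x) e"
      by (rule small_cong[OF small_neg[OF \<open>small L _ e\<close>]]) (simp add: Dop_neg)
  qed
qed

lemma Rel_trans: "Rel L u v \<Longrightarrow> Rel L v w \<Longrightarrow> Rel L u w"
  unfolding Rel_def
proof (intro allI impI)
  fix e :: real
  assume H1: "\<forall>e>0. \<exists>\<eta>. fs L \<eta> \<and> small L (\<lambda>x. delta u x - delta v x - Dop L \<eta> x) e"
    and H2: "\<forall>e>0. \<exists>\<eta>. fs L \<eta> \<and> small L (\<lambda>x. delta v x - delta w x - Dop L \<eta> x) e" and e: "e > 0"
  obtain \<eta>1 where 1: "fs L \<eta>1" "small L (\<lambda>x. delta u x - delta v x - Dop L \<eta>1 x) (e/2)" using H1 e by (meson half_gt_zero)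
  obtain \<eta>2 where 2: "fs L \<eta>2" "small L (\<lambda>x. delta v x - delta w x - Dop L \<eta>2 x) (e/2)" using H2 e by (meson half_gt_zero)
  have "small L (\<lambda>x. (delta u x - delta v x - Dop L \<eta>1 x) + (delta v x - delta w x - Dop L \<eta>2 x)) (e/2 + e/2)"
    by (rule small_add[OF 1(2) 2(2)])
  then have "small L (\<lambda>x. delta u x - delta w x - Dop L (\<lambda>x. \<eta>1 x + \<eta>2 x) x) e"
    by (simp add: Dop_add algebra_simps)
  then show "\<exists>\<eta>. fs L \<eta> \<and> small L (\<lambda>x. delta u x - delta w x - Dop L \<eta> x) e"
    using fs_add[OF 1(1) 2(1)] by blast
qed

lemma Rel_final:
  assumes "Rel L v w" "\<epsilon> > 0"
  shows "\<exists>\<eta>. is_l2 L \<eta> \<and>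
    l2norm L (\<lambda>x. delta v x - delta w x - (left_h L q \<eta> x - right_h L q \<eta> x)) < \<epsilon>"
proof -
  obtain \<eta> where "fs L \<eta>" "small L (\<lambda>x. delta v x - delta w x - Dop L \<eta> x) \<epsilon>"
    using assms unfolding Rel_def by blast
  moreover have "small L (\<lambda>x. delta v x - delta w x - (left_h L q \<eta> x - right_h L q \<eta> x)) \<epsilon>"
    by (rule small_cong[OF calculation(2)]) (simp add: left_right_Dop)
  ultimately show ?thesis using fs_is_l2 small_l2norm by blast
qed

definition Wn :: "nat \<Rightarrow> nat \<Rightarrow> nat list set" where
  "Wn L n = {x \<in> Wset L. length x = n}"

lemma Wn_finite: "finite (Wn L n)"
  by (rule finite_subset[OF _ finite_lists_length_eq[of "{..<L}" n]])
     (auto simp: Wn_def Wset_def)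

lemma Wn_0: "Wn L 0 = {[]}"
  by (auto simp: Wn_def)

lemma card_Wn_Suc: "card (Wn L (Suc n)) \<le> (\<Sum>x\<in>Wn L n. card {s. s < L \<and> (x = [] \<or> s \<noteq> hd x)})"
proof -
  have "Wn L (Suc n) \<subseteq> (\<lambda>(x, s). s # x) ` (SIGMA x:Wn L n. {s. s < L \<and> (x = [] \<or> s \<noteq> hd x)})"
  proof
    fix z assume z: "z \<in> Wn L (Suc n)"
    then obtain s x where "z = s # x" by (cases z) (auto simp: Wn_def)
    with z show "z \<in> (\<lambda>(x, s). s # x) ` (SIGMA x:Wn L n. {s. s < L \<and> (x = [] \<or> s \<noteq> hd x)})"
      by (auto simp: Wn_def Wset_cons image_iff)
  qed
  then have "card (Wn L (Suc n)) \<le> card ((\<lambda>(x, s). s # x) ` (SIGMA x:Wn L n. {s. s < L \<and> (x = [] \<or> s \<noteq> hd x)}))"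
    by (intro card_mono finite_imageI finite_SigmaI Wn_finite) auto
  also have "\<dots> \<le> card (SIGMA x:Wn L n. {s. s < L \<and> (x = [] \<or> s \<noteq> hd x)})"
    by (rule card_image_le) (intro finite_SigmaI Wn_finite, auto)
  also have "\<dots> = (\<Sum>x\<in>Wn L n. card {s. s < L \<and> (x = [] \<or> s \<noteq> hd x)})"
    by (rule card_SigmaI) (auto intro: Wn_finite)
  finally show ?thesis .
qed

lemma card_less_neq: "a < L \<Longrightarrow> card {s. s < L \<and> s \<noteq> a} = L - 1"
proof -
  assume a: "a < L"
  have "{s. s < L \<and> s \<noteq> a} = {..<L} - {a}" by auto
  then show ?thesis using a by simp
qed

lemma card_Wn: assumes "L \<ge> 2" shows "card (Wn L n) \<le> 2 * (L - 1) ^ n"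
proof (induction n rule: nat_less_induct)
  case (1 n)
  show ?case
  proof (cases n)
    case 0 then show ?thesis by (simp add: Wn_0)
  next
    case (Suc m)
    show ?thesis
    proof (cases m)
      case 0
      have "card (Wn L n) \<le> (\<Sum>x\<in>Wn L 0. card {s. s < L \<and> (x = [] \<or> s \<noteq> hd x)})"
        using card_Wn_Suc Suc 0 by simp
      also have "\<dots> = L" by (simp add: Wn_0)
      finally show ?thesis using assms Suc 0 by simp
    next
      case (Suc k)
      have "card (Wn L n) \<le> (\<Sum>x\<in>Wn L m. card {s. s < L \<and> (x = [] \<or> s \<noteq> hd x)})"
        using card_Wn_Suc \<open>n = Suc m\<close> by simp
      also have "\<dots> = (\<Sum>x\<in>Wn L m. L - 1)"
      proof (intro sum.cong refl)
        fix x assume "x \<in> Wn L m"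
        then have "x \<noteq> []" "x \<in> Wset L" using Suc by (auto simp: Wn_def)
        then show "card {s. s < L \<and> (x = [] \<or> s \<noteq> hd x)} = L - 1"
          using card_less_neq[OF Wset_hd] by simp
      qed
      also have "\<dots> = card (Wn L m) * (L - 1)" by simp
      also have "\<dots> \<le> 2 * (L - 1) ^ m * (L - 1)"
        using 1 \<open>n = Suc m\<close> by (intro mult_right_mono) auto
      finally show ?thesis using \<open>n = Suc m\<close> by (simp add: algebra_simps)
    qed
  qed
qed

definition Tp :: "nat list \<Rightarrow> nat \<Rightarrow> nat \<Rightarrow> nat list \<Rightarrow> bool" where
  "Tp y i j x \<longleftrightarrow> length x = i + length y + j \<and> take (length y) (drop i x) = y"

lemma card_Tp:
  assumes "L \<ge> 2"
  shows "card {x \<in> Wset L. Tp y i j x} \<le> 4 * (L - 1) ^ (i + j)"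
proof -
  let ?f = "\<lambda>x. (take i x, drop (i + length y) x)"
  have inj: "inj_on ?f {x \<in> Wset L. Tp y i j x}"
  proof (rule inj_onI)
    fix x z assume x: "x \<in> {x \<in> Wset L. Tp y i j x}" and z: "z \<in> {x \<in> Wset L. Tp y i j x}"
      and eq: "?f x = ?f z"
    have "x = take i x @ take (length y) (drop i x) @ drop (length y) (drop i x)"
      by (metis append_take_drop_id)
    also have "\<dots> = take i x @ y @ drop (i + length y) x" using x by (simp add: Tp_def add.commute)
    also have "\<dots> = take i z @ y @ drop (i + length y) z" using eq by simp
    also have "\<dots> = take i z @ take (length y) (drop i z) @ drop (length y) (drop i z)"
      using z by (simp add: Tp_def add.commute)
    also have "\<dots> = z" by (metis append_take_drop_id)
    finally show "x = z" .
  qed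
  have sub: "?f ` {x \<in> Wset L. Tp y i j x} \<subseteq> Wn L i \<times> Wn L j"
    by (auto simp: Wn_def Tp_def Wset_take Wset_drop)
  have "card {x \<in> Wset L. Tp y i j x} \<le> card (Wn L i \<times> Wn L j)"
    using card_inj_on_le[OF inj sub] Wn_finite by simp
  also have "\<dots> = card (Wn L i) * card (Wn L j)" by (simp add: card_cartesian_product)
  also have "\<dots> \<le> (2 * (L - 1) ^ i) * (2 * (L - 1) ^ j)"
    by (intro mult_mono card_Wn assms) auto
  also have "\<dots> = 4 * (L - 1) ^ (i + j)" by (simp add: power_add)
  finally show ?thesis .
qed

lemma Tp_tl: "x \<noteq> [] \<Longrightarrow> Tp y i j (tl x) \<longleftrightarrow> Tp y (Suc i) j x"
  unfolding Tp_def by (cases x) auto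

lemma Tp_Cons: "Tp y (Suc i) j (s # x) \<longleftrightarrow> Tp y i j x"
  unfolding Tp_def by auto

lemma Tp_Cons0: "Tp y 0 0 z \<longleftrightarrow> z = y"
  unfolding Tp_def by auto

lemma Tp_butlast: "x \<noteq> [] \<Longrightarrow> Tp y i j (butlast x) \<longleftrightarrow> Tp y i (Suc j) x"
  unfolding Tp_def
  by (cases x rule: rev_cases) auto

lemma Tp_snoc: "Tp y i (Suc j) (x @ [s]) \<longleftrightarrow> Tp y i j x"
  unfolding Tp_def by auto

definition ind :: "bool \<Rightarrow> real" where "ind P = (if P then 1 else 0)"

definition chi :: "nat \<Rightarrow> nat list \<Rightarrow> nat \<Rightarrow> nat list \<Rightarrow> real" where
  "chi L y k x = ind (x \<in> Wset L \<and> Tp y k k x)"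

definition Dr :: "nat \<Rightarrow> (nat list \<Rightarrow> real) \<Rightarrow> nat list \<Rightarrow> real" where
  "Dr L f x = (\<Sum>s<L. f (lmul s x) - f (rmul x s))"

lemma Dop_of_real: "Dop L (\<lambda>x. complex_of_real (f x)) x = complex_of_real (Dr L f x)"
  unfolding Dop_def Dr_def by simp

lemma sum_lmul:
  assumes "x \<in> Wset L" "x \<noteq> []"
  shows "(\<Sum>s<L. f (lmul s x)) = f (tl x) + (\<Sum>s\<in>{..<L} - {hd x}. f (s # x))"
proof -
  have "(\<Sum>s<L. f (lmul s x)) = f (lmul (hd x) x) + (\<Sum>s\<in>{..<L} - {hd x}. f (lmul s x))"
    using Wset_hd[OF assms] by (intro sum.remove) auto
  also have "(\<Sum>s\<in>{..<L} - {hd x}. f (lmul s x)) = (\<Sum>s\<in>{..<L} - {hd x}. f (s # x))"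
    by (intro sum.cong) (auto simp: lmul_def)
  finally show ?thesis using assms(2) by (simp add: lmul_def)
qed

lemma sum_rmul:
  assumes "x \<in> Wset L" "x \<noteq> []"
  shows "(\<Sum>s<L. f (rmul x s)) = f (butlast x) + (\<Sum>s\<in>{..<L} - {last x}. f (x @ [s]))"
proof -
  have "(\<Sum>s<L. f (rmul x s)) = f (rmul x (last x)) + (\<Sum>s\<in>{..<L} - {last x}. f (rmul x s))"
    using Wset_last[OF assms] by (intro sum.remove) auto
  also have "(\<Sum>s\<in>{..<L} - {last x}. f (rmul x s)) = (\<Sum>s\<in>{..<L} - {last x}. f (x @ [s]))"
    by (intro sum.cong) (auto simp: rmul_def)
  finally show ?thesis using assms(2) by (simp add: rmul_def)
qed

lemma card_minus_one: "a < L \<Longrightarrow> real (card ({..<L} - {a})) = real (L - 1)"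
  by simp

lemma LS:
  assumes x: "x \<in> Wset L" "x \<noteq> []" and y: "y \<in> Wset L" "y \<noteq> []"
  shows "(\<Sum>s<L. chi L y k (lmul s x)) = ind (Tp y (Suc k) k x) +
     (if k = 0 then ind (x = tl y) else real (L - 1) * ind (Tp y (k - 1) k x))"
proof -
  have 1: "chi L y k (tl x) = ind (Tp y (Suc k) k x)"
    unfolding chi_def using Wset_tl[OF x(1)] Tp_tl[OF x(2)] by simp
  have 2: "(\<Sum>s\<in>{..<L} - {hd x}. chi L y k (s # x)) = (\<Sum>s\<in>{..<L} - {hd x}. ind (Tp y k k (s # x)))"
    using x by (intro sum.cong) (auto simp: chi_def Wset_cons)
  have 3: "(\<Sum>s\<in>{..<L} - {hd x}. ind (Tp y k k (s # x))) =
     (if k = 0 then ind (x = tl y) else real (L - 1) * ind (Tp y (k - 1) k x))"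
  proof (cases k)
    case 0
    show ?thesis
    proof (cases "x = tl y")
      case True
      have yy: "y = hd y # x" using True y(2) by simp
      have hy: "hd y < L" "hd y \<noteq> hd x" using y(1) x(2) yy Wset_cons[of "hd y" x L] by auto
      have "(\<Sum>s\<in>{..<L} - {hd x}. ind (Tp y k k (s # x))) = (\<Sum>s\<in>{..<L} - {hd x}. if s = hd y then 1 else 0)"
      proof (intro sum.cong refl)
        fix s
        have e: "(s # x = y) = (s = hd y)" by (metis yy list.inject)
        show "ind (Tp y k k (s # x)) = (if s = hd y then 1 else 0)"
          using 0 e by (simp add: Tp_Cons0 ind_def)
      qed
      also have "\<dots> = 1" using hy by (simp add: sum.delta')
      finally show ?thesis using 0 True by (simp add: ind_def)
    next
      case False
      have "(\<Sum>s\<in>{..<L} - {hd x}. ind (Tp y k k (s # x))) = (\<Sum>s\<in>{..<L} - {hd x}. 0)"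
        using 0 False by (intro sum.cong refl) (auto simp: Tp_Cons0 ind_def)
      then show ?thesis using 0 False by (simp add: ind_def)
    qed
  next
    case (Suc k')
    have "(\<Sum>s\<in>{..<L} - {hd x}. ind (Tp y k k (s # x))) = (\<Sum>s\<in>{..<L} - {hd x}. ind (Tp y k' k x))"
      using Suc by (intro sum.cong refl) (simp add: Tp_Cons)
    also have "\<dots> = real (L - 1) * ind (Tp y k' k x)"
      using Wset_hd[OF x] by simp
    finally show ?thesis using Suc by simp
  qed
  show ?thesis using sum_lmul[OF x, of "chi L y k"] 1 2 3 by simp
qed

lemma RS:
  assumes x: "x \<in> Wset L" "x \<noteq> []" and y: "y \<in> Wset L" "y \<noteq> []"
  shows "(\<Sum>s<L. chi L y k (rmul x s)) = ind (Tp y k (Suc k) x) +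
     (if k = 0 then ind (x = butlast y) else real (L - 1) * ind (Tp y k (k - 1) x))"
proof -
  have 1: "chi L y k (butlast x) = ind (Tp y k (Suc k) x)"
    unfolding chi_def using Wset_butlast[OF x(1)] Tp_butlast[OF x(2)] by simp
  have 2: "(\<Sum>s\<in>{..<L} - {last x}. chi L y k (x @ [s])) = (\<Sum>s\<in>{..<L} - {last x}. ind (Tp y k k (x @ [s])))"
    using x by (intro sum.cong) (auto simp: chi_def Wset_snoc)
  have 3: "(\<Sum>s\<in>{..<L} - {last x}. ind (Tp y k k (x @ [s]))) =
     (if k = 0 then ind (x = butlast y) else real (L - 1) * ind (Tp y k (k - 1) x))"
  proof (cases k)
    case 0
    show ?thesis
    proof (cases "x = butlast y")
      case True
      have yy: "y = x @ [last y]" using True y(2) by simp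
      have hy: "last y < L" "last y \<noteq> last x" using y(1) x(2) yy Wset_snoc[of x "last y" L] by auto
      have "(\<Sum>s\<in>{..<L} - {last x}. ind (Tp y k k (x @ [s]))) = (\<Sum>s\<in>{..<L} - {last x}. if s = last y then 1 else 0)"
      proof (intro sum.cong refl)
        fix s
        have e: "(x @ [s] = y) = (s = last y)" by (metis yy append1_eq_conv)
        show "ind (Tp y k k (x @ [s])) = (if s = last y then 1 else 0)"
          using 0 e by (simp add: Tp_Cons0 ind_def)
      qed
      also have "\<dots> = 1" using hy by (simp add: sum.delta')
      finally show ?thesis using 0 True by (simp add: ind_def)
    next
      case False
      have "(\<Sum>s\<in>{..<L} - {last x}. ind (Tp y k k (x @ [s]))) = (\<Sum>s\<in>{..<L} - {last x}. 0)"
        using 0 False by (intro sum.cong refl) (auto simp: Tp_Cons0 ind_def)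
      then show ?thesis using 0 False by (simp add: ind_def)
    qed
  next
    case (Suc k')
    have "(\<Sum>s\<in>{..<L} - {last x}. ind (Tp y k k (x @ [s]))) = (\<Sum>s\<in>{..<L} - {last x}. ind (Tp y k k' x))"
      using Suc by (intro sum.cong refl) (simp add: Tp_snoc)
    also have "\<dots> = real (L - 1) * ind (Tp y k k' x)"
      using Wset_last[OF x] by simp
    finally show ?thesis using Suc by simp
  qed
  show ?thesis using sum_rmul[OF x, of "chi L y k"] 1 2 3 by simp
qed

lemma shift_sum:
  fixes c u :: "nat \<Rightarrow> real"
  assumes "c (Suc n) = 0" "c 0 = 1"
  shows "(\<Sum>k<Suc n. c k * (u k + (if k = 0 then a else - (b * u (k - 1))))) =
         a + (\<Sum>k<Suc n. (c k - b * c (Suc k)) * u k)"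
proof -
  have A0: "(\<Sum>k<Suc n. c k * (if k = 0 then a else - (b * u (k - 1)))) = c 0 * a + (\<Sum>k<n. c (Suc k) * (- (b * u k)))"
    by (subst sum.lessThan_Suc_shift) simp
  have A: "(\<Sum>k<Suc n. c k * (if k = 0 then a else - (b * u (k - 1)))) = a - (\<Sum>k<n. b * c (Suc k) * u k)"
    unfolding A0 using assms(2) by (simp add: sum_negf algebra_simps)
  have B: "(\<Sum>k<Suc n. b * c (Suc k) * u k) = (\<Sum>k<n. b * c (Suc k) * u k)"
    using assms(1) by simp
  have "(\<Sum>k<Suc n. c k * (u k + (if k = 0 then a else - (b * u (k - 1))))) =
     (\<Sum>k<Suc n. c k * u k) + (\<Sum>k<Suc n. c k * (if k = 0 then a else - (b * u (k - 1))))"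
    by (simp only: distrib_left sum.distrib)
  also have "\<dots> = (\<Sum>k<Suc n. c k * u k) + a - (\<Sum>k<Suc n. b * c (Suc k) * u k)"
    by (simp only: A B)
  also have "\<dots> = a + (\<Sum>k<Suc n. (c k - b * c (Suc k)) * u k)"
    by (simp add: sum_subtractf left_diff_distrib)
  finally show ?thesis .
qed

definition cc :: "nat \<Rightarrow> real \<Rightarrow> nat \<Rightarrow> real" where
  "cc N b k = (real N - real k) / (real N * b ^ k)"

definition etar :: "nat \<Rightarrow> nat list \<Rightarrow> nat \<Rightarrow> nat list \<Rightarrow> real" where
  "etar L y N x = (\<Sum>k<N. cc N (real (L - 1)) k * chi L y k x)"

definition uu :: "nat list \<Rightarrow> nat \<Rightarrow> nat list \<Rightarrow> real" where
  "uu y k x = ind (Tp y (Suc k) k x) - ind (Tp y k (Suc k) x)"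

lemma Dr_etar:
  assumes x: "x \<in> Wset L" and y: "y \<in> Wset L" "y \<noteq> []" and N: "N > 0" and L: "L \<ge> 2"
  shows "Dr L (etar L y N) x = ind (x = tl y) - ind (x = butlast y) +
     (\<Sum>k<N. 1 / (real N * real (L - 1) ^ k) * uu y k x)"
proof (cases "x = []")
  case True
  have "Dr L (etar L y N) x = 0" unfolding Dr_def True by (simp add: lmul_def rmul_def)
  moreover have "ind (x = tl y) - ind (x = butlast y) = 0"
    using True y(2) by (cases y) (auto simp: ind_def)
  moreover have "uu y k x = 0" for k
    using True by (simp add: uu_def Tp_def ind_def)
  ultimately show ?thesis by simp
next
  case False
  let ?b = "real (L - 1)"
  let ?a = "ind (x = tl y) - ind (x = butlast y)"
  have b: "?b \<noteq> 0" using L by simp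
  have "Dr L (etar L y N) x = (\<Sum>k<N. cc N ?b k * ((\<Sum>s<L. chi L y k (lmul s x)) - (\<Sum>s<L. chi L y k (rmul x s))))"
  proof -
    have "Dr L (etar L y N) x = (\<Sum>s<L. \<Sum>k<N. cc N ?b k * (chi L y k (lmul s x) - chi L y k (rmul x s)))"
      unfolding Dr_def etar_def by (simp only: sum_subtractf[symmetric] right_diff_distrib)
    also have "\<dots> = (\<Sum>k<N. \<Sum>s<L. cc N ?b k * (chi L y k (lmul s x) - chi L y k (rmul x s)))"
      by (rule sum.swap)
    also have "\<dots> = (\<Sum>k<N. cc N ?b k * ((\<Sum>s<L. chi L y k (lmul s x)) - (\<Sum>s<L. chi L y k (rmul x s))))"
      by (simp only: sum_distrib_left[symmetric] sum_subtractf)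
    finally show ?thesis .
  qed
  also have "\<dots> = (\<Sum>k<N. cc N ?b k * (uu y k x + (if k = 0 then ?a else - (?b * uu y (k - 1) x))))"
  proof (intro sum.cong refl arg_cong2[where f="(*)"])
    fix k
    show "(\<Sum>s<L. chi L y k (lmul s x)) - (\<Sum>s<L. chi L y k (rmul x s)) =
          uu y k x + (if k = 0 then ?a else - (?b * uu y (k - 1) x))"
      using LS[OF x False y, of k] RS[OF x False y, of k]
      by (cases k) (simp_all add: uu_def algebra_simps)
  qed
  also have "\<dots> = ?a + (\<Sum>k<N. (cc N ?b k - ?b * cc N ?b (Suc k)) * uu y k x)"
  proof -
    obtain n where n: "N = Suc n" using N by (cases N) auto
    show ?thesis unfolding n
      by (rule shift_sum) (use N in \<open>simp_all add: cc_def n\<close>)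
  qed
  also have "(\<Sum>k<N. (cc N ?b k - ?b * cc N ?b (Suc k)) * uu y k x) =
             (\<Sum>k<N. 1 / (real N * ?b ^ k) * uu y k x)"
  proof (intro sum.cong refl arg_cong2[where f="(*)"])
    fix k
    show "cc N ?b k - ?b * cc N ?b (Suc k) = 1 / (real N * ?b ^ k)"
      unfolding cc_def using b N by (simp add: field_simps)
  qed
  finally show ?thesis .
qed

lemma sum_single:
  assumes "finite A" "k \<in> A" "\<And>j. j \<in> A \<Longrightarrow> j \<noteq> k \<Longrightarrow> f j = 0"
  shows "sum f A = f k"
proof -
  have "sum f A = f k + sum f (A - {k})" using assms by (intro sum.remove) auto
  also have "sum f (A - {k}) = 0" using assms by (intro sum.neutral) auto
  finally show ?thesis by simp
qed

lemma uu_nz: "uu y k x \<noteq> 0 \<Longrightarrow> length x = Suc (2 * k + length y)"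
  unfolding uu_def ind_def Tp_def by (auto split: if_splits)

lemma sq_sum_single:
  fixes d :: "nat \<Rightarrow> real"
  shows "(\<Sum>k<N. d k * uu y k x)\<^sup>2 = (\<Sum>k<N. (d k)\<^sup>2 * (uu y k x)\<^sup>2)"
proof (cases "\<exists>k<N. uu y k x \<noteq> 0")
  case True
  then obtain k0 where k0: "k0 < N" "uu y k0 x \<noteq> 0" by blast
  have z: "uu y j x = 0" if "j \<noteq> k0" for j
    using uu_nz[OF k0(2)] uu_nz[of y j x] that by fastforce
  have "(\<Sum>k<N. d k * uu y k x) = d k0 * uu y k0 x"
    using k0 z by (intro sum_single) auto
  moreover have "(\<Sum>k<N. (d k)\<^sup>2 * (uu y k x)\<^sup>2) = (d k0)\<^sup>2 * (uu y k0 x)\<^sup>2"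
    using k0 z by (intro sum_single) auto
  ultimately show ?thesis by (simp add: power_mult_distrib)
next
  case False
  then show ?thesis by simp
qed

lemma Tp_set_finite: "finite {x \<in> Wset L. Tp y i j x}"
  by (rule finite_subset[OF _ Wn_finite[of L "i + length y + j"]]) (auto simp: Wn_def Tp_def)

lemma sum_ind_le:
  assumes "finite A" "A \<subseteq> Wset L"
  shows "(\<Sum>x\<in>A. ind (Tp y i j x)) \<le> real (card {x \<in> Wset L. Tp y i j x})"
proof -
  have "(\<Sum>x\<in>A. ind (Tp y i j x)) = (\<Sum>x\<in>{x\<in>A. Tp y i j x}. 1)"
    unfolding ind_def using sum.inter_filter[OF assms(1), of "\<lambda>_. 1::real" "Tp y i j"] by simp
  also have "\<dots> = real (card {x\<in>A. Tp y i j x})" by simp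
  also have "\<dots> \<le> real (card {x \<in> Wset L. Tp y i j x})"
    using assms by (intro of_nat_mono card_mono Tp_set_finite) auto
  finally show ?thesis .
qed

lemma sq_uu_le: "(uu y k x)\<^sup>2 \<le> ind (Tp y (Suc k) k x) + ind (Tp y k (Suc k) x)"
  unfolding uu_def ind_def by auto

lemma card_Tp_real:
  assumes "L \<ge> 2"
  shows "real (card {x \<in> Wset L. Tp y i j x}) \<le> 4 * real (L - 1) ^ (i + j)"
proof -
  have "real (card {x \<in> Wset L. Tp y i j x}) \<le> real (4 * (L - 1) ^ (i + j))"
    using card_Tp[OF assms] by (intro of_nat_mono) auto
  then show ?thesis by (simp only: of_nat_mult of_nat_power)
qed

lemma norm_est:
  assumes "finite A" "A \<subseteq> Wset L" "L \<ge> 2" "N > 0"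
  shows "(\<Sum>x\<in>A. (\<Sum>k<N. 1 / (real N * real (L - 1) ^ k) * uu y k x)\<^sup>2) \<le> 8 * real (L - 1) / real N"
proof -
  define b where "b = real (L - 1)"
  have b: "b > 0" using assms(3) by (simp add: b_def)
  have "(\<Sum>x\<in>A. (\<Sum>k<N. 1 / (real N * b ^ k) * uu y k x)\<^sup>2) =
        (\<Sum>x\<in>A. \<Sum>k<N. (1 / (real N * b ^ k))\<^sup>2 * (uu y k x)\<^sup>2)"
    by (simp only: sq_sum_single)
  also have "\<dots> = (\<Sum>k<N. \<Sum>x\<in>A. (1 / (real N * b ^ k))\<^sup>2 * (uu y k x)\<^sup>2)"
    by (rule sum.swap)
  also have "\<dots> = (\<Sum>k<N. (1 / (real N * b ^ k))\<^sup>2 * (\<Sum>x\<in>A. (uu y k x)\<^sup>2))"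
    by (simp only: sum_distrib_left)
  also have "\<dots> \<le> (\<Sum>k<N. (1 / (real N * b ^ k))\<^sup>2 * (8 * b ^ (2 * k + 1)))"
  proof (intro sum_mono mult_left_mono)
    fix k
    have "(\<Sum>x\<in>A. (uu y k x)\<^sup>2) \<le> (\<Sum>x\<in>A. ind (Tp y (Suc k) k x) + ind (Tp y k (Suc k) x))"
      by (intro sum_mono sq_uu_le)
    also have "\<dots> = (\<Sum>x\<in>A. ind (Tp y (Suc k) k x)) + (\<Sum>x\<in>A. ind (Tp y k (Suc k) x))"
      by (rule sum.distrib)
    also have "\<dots> \<le> real (card {x \<in> Wset L. Tp y (Suc k) k x}) + real (card {x \<in> Wset L. Tp y k (Suc k) x})"
      by (intro add_mono sum_ind_le assms)
    also have "\<dots> \<le> 4 * b ^ (Suc k + k) + 4 * b ^ (k + Suc k)"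
      unfolding b_def by (intro add_mono card_Tp_real assms)
    also have "\<dots> = 8 * b ^ (2 * k + 1)" by (simp add: mult_2)
    finally show "(\<Sum>x\<in>A. (uu y k x)\<^sup>2) \<le> 8 * b ^ (2 * k + 1)" .
  qed simp
  also have "\<dots> = (\<Sum>k<N. 8 * b / (real N)\<^sup>2)"
  proof (intro sum.cong refl)
    fix k
    have eq: "b ^ (2 * k + 1) = b * (b ^ k)\<^sup>2" by (simp add: mult_2 power_add power2_eq_square)
    show "(1 / (real N * b ^ k))\<^sup>2 * (8 * b ^ (2 * k + 1)) = 8 * b / (real N)\<^sup>2"
      unfolding eq using b by (simp add: field_simps power_mult_distrib power2_eq_square)
  qed
  also have "\<dots> = 8 * b / real N" using assms(4) by (simp add: power2_eq_square)
  finally show ?thesis unfolding b_def .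
qed

lemma finite_Wset_le: "finite {x \<in> Wset L. length x \<le> n}"
  by (rule finite_subset[OF _ finite_lists_length_le[of "{..<L}" n]]) (auto simp: Wset_def)

lemma Rel_move_main:
  assumes y: "y \<in> Wset L" "y \<noteq> []" and L: "L \<ge> 2"
  shows "Rel L (tl y) (butlast y)"
  unfolding Rel_def
proof (intro allI impI)
  fix e :: real assume e: "e > 0"
  define b where "b = real (L - 1)"
  have b: "b > 0" using L by (simp add: b_def)
  define N where "N = nat \<lceil>8 * b / e\<^sup>2\<rceil> + 1"
  have N0: "N > 0" by (simp add: N_def)
  have "8 * b / e\<^sup>2 < real N" unfolding N_def by linarith
  then have Nlt: "8 * b / real N < e\<^sup>2" using N0 e by (simp add: field_simps)
  define \<eta> where "\<eta> = (\<lambda>x. complex_of_real (etar L y N x))"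
  define g where "g = (\<lambda>x. \<Sum>k<N. 1 / (real N * real (L - 1) ^ k) * uu y k x)"
  define A where "A = {x \<in> Wset L. length x \<le> length y + 2 * N}"
  have chi0: "chi L y k x = 0" if "\<not> (x \<in> Wset L \<and> length x = 2 * k + length y)" for k x
    using that unfolding chi_def ind_def Tp_def by auto
  have fs: "fs L \<eta>"
    unfolding fs_def
  proof
    show "\<forall>x. x \<notin> Wset L \<longrightarrow> \<eta> x = 0" by (simp add: \<eta>_def etar_def chi0)
    have "{x. \<eta> x \<noteq> 0} \<subseteq> A"
    proof
      fix x assume "x \<in> {x. \<eta> x \<noteq> 0}"
      then have "etar L y N x \<noteq> 0" by (simp add: \<eta>_def)
      then obtain k where "k < N" "chi L y k x \<noteq> 0"
        by (metis (no_types, lifting) etar_def lessThan_iff mult_zero_right sum.neutral)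
      then have "x \<in> Wset L" "length x = 2 * k + length y" using chi0[of x k] by auto
      then show "x \<in> A" using \<open>k < N\<close> by (simp add: A_def)
    qed
    then show "finite {x. \<eta> x \<noteq> 0}" using finite_Wset_le unfolding A_def by (rule finite_subset)
  qed
  have err: "delta (tl y) x - delta (butlast y) x - Dop L \<eta> x = complex_of_real (- g x)"
    if "x \<in> Wset L" for x
  proof -
    have "Dop L \<eta> x = complex_of_real (Dr L (etar L y N) x)"
      unfolding \<eta>_def by (rule Dop_of_real)
    also have "\<dots> = complex_of_real (ind (x = tl y) - ind (x = butlast y) + g x)"
      unfolding g_def using Dr_etar[OF that y N0 L] by simp
    finally show ?thesis by (simp add: delta_def ind_def)
  qed
  have gz: "g x = 0" if "x \<in> Wset L - A" for x
  proof -
    have "uu y k x = 0" if "k < N" for k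
    proof (rule ccontr)
      assume "uu y k x \<noteq> 0"
      then have "length x = Suc (2 * k + length y)" by (rule uu_nz)
      then show False using \<open>x \<in> Wset L - A\<close> that by (simp add: A_def)
    qed
    then show ?thesis unfolding g_def by simp
  qed
  have finA: "finite A" "A \<subseteq> Wset L" using finite_Wset_le by (auto simp: A_def)
  have "L2_set (\<lambda>x. norm (complex_of_real (- g x))) A = sqrt (\<Sum>x\<in>A. (g x)\<^sup>2)"
    unfolding L2_set_def by simp
  also have "\<dots> \<le> sqrt (8 * b / real N)"
    unfolding g_def b_def by (intro real_sqrt_le_mono norm_est finA L N0)
  also have "\<dots> < sqrt (e\<^sup>2)" using Nlt by (intro real_sqrt_less_mono)
  also have "\<dots> = e" using e by simp
  finally have "small L (\<lambda>x. complex_of_real (- g x)) e"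
    unfolding small_def using finA gz by (intro exI[of _ A]) auto
  then have "small L (\<lambda>x. delta (tl y) x - delta (butlast y) x - Dop L \<eta> x) e"
    by (rule small_cong) (rule err)
  then show "\<exists>\<eta>. fs L \<eta> \<and> small L (\<lambda>x. delta (tl y) x - delta (butlast y) x - Dop L \<eta> x) e"
    using fs by blast
qed

lemma Rel_move:
  assumes "x \<in> Wset L" "x \<noteq> []" "s < L" "s \<noteq> hd x" "L \<ge> 2"
  shows "Rel L x (s # butlast x)"
proof -
  have "s # x \<in> Wset L" using assms by (simp add: Wset_cons)
  from Rel_move_main[OF this _ assms(5)] show ?thesis using assms(2) by simp
qed

lemma Rel_chain:
  assumes x: "x \<in> Wset L" and z: "z \<in> Wset L" and len: "length x = n" "length z = n" and n: "n > 0"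
    and lz: "last z \<noteq> hd x" and L: "L \<ge> 2"
  shows "k \<le> n \<Longrightarrow> Rel L x (drop (n - k) z @ take (n - k) x)"
proof (induction k)
  case 0
  then show ?case using len by (simp add: Rel_refl)
next
  case (Suc k)
  let ?c = "drop (n - k) z @ take (n - k) x"
  let ?s = "z ! (n - Suc k)"
  have IH: "Rel L x ?c" using Suc by simp
  have nk: "n - k \<ge> 1" using Suc by simp
  have tx: "take (n - k) x \<noteq> []" using nk len n by (cases x) auto
  have cW: "?c \<in> Wset L"
  proof (rule Wset_append)
    show "drop (n - k) z \<in> Wset L" by (rule Wset_drop[OF z])
    show "take (n - k) x \<in> Wset L" by (rule Wset_take[OF x])
    show "drop (n - k) z = [] \<or> take (n - k) x = [] \<or> last (drop (n - k) z) \<noteq> hd (take (n - k) x)"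
      using lz tx len by (cases "drop (n - k) z = []") (auto simp: last_drop hd_take)
  qed
  have c0: "?c \<noteq> []" using tx by simp
  have sL: "?s < L"
  proof -
    have "?s \<in> set z" using len Suc.prems by (intro nth_mem) simp
    then show ?thesis using z unfolding Wset_def by auto
  qed
  have sneq: "?s \<noteq> hd ?c"
  proof (cases k)
    case 0
    then have "?c = x" using len by simp
    moreover have "?s = last z"
    proof -
      have "z \<noteq> []" using len n by auto
      then show ?thesis using 0 len by (simp add: last_conv_nth)
    qed
    ultimately show ?thesis using lz by simp
  next
    case (Suc k')
    have "drop (n - k) z \<noteq> []" using Suc len \<open>Suc k \<le> n\<close> by simp
    then have "hd ?c = z ! (n - k)" using len by (simp add: hd_drop_conv_nth)
    moreover have "z ! (n - Suc k) \<noteq> z ! Suc (n - Suc k)"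
    proof -
      have "Suc (n - Suc k) < length z" using \<open>k = Suc k'\<close> len \<open>Suc k \<le> n\<close> by simp
      then show ?thesis using z unfolding Wset_def by blast
    qed
    moreover have "Suc (n - Suc k) = n - k" using \<open>Suc k \<le> n\<close> by simp
    ultimately show ?thesis by simp
  qed
  have "Rel L ?c (?s # butlast ?c)" by (rule Rel_move[OF cW c0 sL sneq L])
  moreover have "?s # butlast ?c = drop (n - Suc k) z @ take (n - Suc k) x"
  proof -
    have "butlast ?c = drop (n - k) z @ butlast (take (n - k) x)"
      using tx by (simp add: butlast_append)
    also have "butlast (take (n - k) x) = take (n - Suc k) x"
      using len \<open>Suc k \<le> n\<close> by (simp add: butlast_take)
    finally have "?s # butlast ?c = (z ! (n - Suc k) # drop (Suc (n - Suc k)) z) @ take (n - Suc k) x"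
      using \<open>Suc k \<le> n\<close> by (simp add: Suc_diff_Suc)
    also have "z ! (n - Suc k) # drop (Suc (n - Suc k)) z = drop (n - Suc k) z"
      using \<open>Suc k \<le> n\<close> len by (intro Cons_nth_drop_Suc) simp
    finally show ?thesis .
  qed
  ultimately show ?case using Rel_trans IH by metis
qed

lemma Rel_lastz:
  assumes "x \<in> Wset L" "z \<in> Wset L" "length x = length z" "x \<noteq> []" "last z \<noteq> hd x" "L \<ge> 2"
  shows "Rel L x z"
proof -
  have "Rel L x (drop (length x - length x) z @ take (length x - length x) x)"
    using assms by (intro Rel_chain[where n="length x"]) auto
  then show ?thesis by simp
qed

lemma third_letter: "L \<ge> 3 \<Longrightarrow> \<exists>c<L. c \<noteq> a \<and> c \<noteq> (b::nat)"
proof -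
  assume "L \<ge> 3"
  note L = this
  show ?thesis
  proof (cases "a \<noteq> 0 \<and> b \<noteq> 0")
    case True then show ?thesis using L by (intro exI[of _ 0]) auto
  next
    case F1: False
    show ?thesis
    proof (cases "a \<noteq> 1 \<and> b \<noteq> 1")
      case True then show ?thesis using L by (intro exI[of _ 1]) auto
    next
      case False then show ?thesis using F1 L by (intro exI[of _ 2]) auto
    qed
  qed
qed

lemma Rel_same_length:
  assumes "L \<ge> 3" "v \<in> Wset L" "w \<in> Wset L" "length v = length w"
  shows "Rel L v w"
proof (cases "v = []")
  case True
  then show ?thesis using assms by (simp add: Rel_refl)
next
  case False
  let ?n = "length v"
  have w0: "w \<noteq> []" using False assms by auto
  obtain c where c: "c < L" "c \<noteq> last w" "c \<noteq> hd v" using third_letter[OF assms(1)] by blast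
  obtain d where d: "d < L" "d \<noteq> c" "d \<noteq> hd v" using third_letter[OF assms(1)] by blast
  define u where "u = map (\<lambda>i. if even i then c else d) [0..<?n]"
  have lu: "length u = ?n" by (simp add: u_def)
  have u0: "u \<noteq> []" using False by (simp add: u_def)
  have un: "u ! i = (if even i then c else d)" if "i < ?n" for i
    using that by (simp add: u_def)
  have uW: "u \<in> Wset L"
    unfolding Wset_def
  proof (intro CollectI conjI allI impI)
    show "set u \<subseteq> {..<L}" using c d by (auto simp: u_def)
    fix i assume "Suc i < length u"
    then show "u ! i \<noteq> u ! Suc i" using un[of i] un[of "Suc i"] lu d by auto
  qed
  have hu: "hd u = c" using False by (simp add: u_def hd_map hd_upt)
  have lastu: "last u = c \<or> last u = d"
  proof -
    have "last u = u ! (?n - 1)" using u0 lu by (simp add: last_conv_nth)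
    also have "\<dots> = (if even (?n - 1) then c else d)" using False by (intro un) simp
    finally show ?thesis by auto
  qed
  have "Rel L v u"
    using Rel_lastz[OF assms(2) uW lu[symmetric] False] lastu c d assms(1) by auto
  moreover have "Rel L u w"
    using Rel_lastz[OF uW assms(3) _ u0] lu assms hu c by auto
  ultimately show ?thesis by (rule Rel_trans)
qed

theorem lemma2p4:
  fixes L :: nat and q \<epsilon> :: real and v w :: "nat list"
  assumes "L \<ge> 3" and "0 < q" and "q \<le> 1"
    and "v \<in> Wset L" and "w \<in> Wset L" and "length v = length w"
    and "\<epsilon> > 0"
  shows "\<exists>\<eta>. is_l2 L \<eta> \<and>
    l2norm L (\<lambda>x. delta v x - delta w x - (left_h L q \<eta> x - right_h L q \<eta> x)) < \<epsilon>"
  using Rel_final[OF Rel_same_length[OF assms(1) assms(4) assms(5) assms(6)] assms(7)] .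

end
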